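(* (Extension Lemma.) Let $\Gamma$ be an abstract consistency class and $A\in\Gamma$. Then there exists an evident branch $E$ with $A\subseteq E$. Moreover, if $\Gamma$ is complete, there exists a complete evident branch $E$ with $A\subseteq E$.
   Context: Types: a countable set of base types including a distinguished $o$; other base types are sorts ($\alpha$). Types: base types and $\sigma\tau$ (functions from $\sigma$ to $\tau$; $\sigma\tau\mu=\sigma(\tau\mu)$). Countably many names, each with a unique type, infinitely many of each type. Terms: names; $st:\mu$ for $s:\tau\mu,t:\tau$; $\lambda x.t:\sigma\tau$ for a name $x:\sigma$, $t:\tau$. Logical constants: $\neg:oo$, $=_\sigma:\sigma\sigma o$; all other names are variables. Formulas: terms of type $o$; $s=_\sigma t$ is $(=_\sigma s)t$; $s\neq_\sigma t$ is $\neg(s=_\sigma t)$. A fixed type-preserving total normalization operator $[\cdot]$ on terms is given; $s$ is normal iff $[s]=s$; it satisfies $[[s]]=[s]$, $[[s]t]=[st]$, and $[xs_1\dots s_n]=x[s_1]\dots[s_n]$ for every name $x$ and $n\ge0$ with $xs_1\dots s_n$ of base type. A branch is a set of normal formulas. A branch $E$ is evident if ($x$ ranges over variables): (DN) $\neg\neg s\in E\Rightarrow s\in E$; (BQ) $s=_ot\in E\Rightarrow$ ($s,t\in E$ or $\neg s,\neg t\in E$); (BE) $s\neq_ot\in E\Rightarrow$ ($s,\neg t\in E$ or $\neg s,t\in E$); (FQ) $s=_{\sigma\tau}t\in E\Rightarrow[su]=[tu]\in E$ for every normal $u:\sigma$; (FE) $s\neq_{\sigma\tau}t\in E\Rightarrow[sx]\neq[tx]\in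 E$ for some variable $x$; (Mat) if $xs_1\dots s_n,\neg xt_1\dots t_n\in E$ then $n\ge1$ and $s_i\neq t_i\in E$ for some $i$; (Dec) if $xs_1\dots s_n\neq_\alpha xt_1\dots t_n\in E$ then $n\ge1$ and $s_i\neq t_i\in E$ for some $i$; (Con) if $s=_\alpha t,u\neq_\alpha v\in E$ then ($s\neq u,t\neq u\in E$) or ($s\neq v,t\neq v\in E$). $E$ is complete if for every normal formula $s$, $s\in E$ or $\neg s\in E$. An abstract consistency class is a set $\Gamma$ of branches such that every $A\in\Gamma$ satisfies: (DN) if $\neg\neg s\in A$ then $A\cup\{s\}\in\Gamma$; (BQ) if $s=_ot\in A$ then $A\cup\{s,t\}\in\Gamma$ or $A\cup\{\neg s,\neg t\}\in\Gamma$; (BE) if $s\neq_ot\in A$ then $A\cup\{s,\neg t\}\in\Gamma$ or $A\cup\{\neg s,t\}\in\Gamma$; (FQ) if $s=_{\sigma\tau}t\in A$ then $A\cup\{[su]=[tu]\}\in\Gamma$ for every normal $u:\sigma$; (FE) if $s\neq_{\sigma\tau}t\in A$ then $A\cup\{[sx]\neq[tx]\}\in\Gamma$ for some variable $x$; (Mat) if $xs_1\dots s_n\in A$ and $\neg xt_1\dots t_n\in A$ then $n\ge1$ and $A\cup\{s_i\neq t_i\}\in\Gamma$ for some $i$; (Dec) if $xs_1\dots s_n\neq_\alpha xt_1\dots t_n\in A$ then $n\ge1$ and $A\cup\{s_i\neq t_i\}\in\Gamma$ for some $i$; (Con) if $s=_\alpha t$ and $u\neq_\alpha v$ are in $A$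 then $A\cup\{s\neq u,t\neq u\}\in\Gamma$ or $A\cup\{s\neq v,t\neq v\}\in\Gamma$. $\Gamma$ is complete if for every $A\in\Gamma$ and every normal formula $s$, $A\cup\{s\}\in\Gamma$ or $A\cup\{\neg s\}\in\Gamma$. *)

theory Defs
  imports Main
begin

datatype ty = To | Sort nat | Fun ty ty

datatype name = Neg | Eq ty | V nat ty

fun nty :: "name \<Rightarrow> ty" where
  "nty Neg = Fun To To"
| "nty (Eq T) = Fun T (Fun T To)"
| "nty (V k T) = T"

datatype tm = N name | App tm tm | Lam name tm

fun tyof :: "tm \<Rightarrow> ty option" where
  "tyof (N x) = Some (nty x)"
| "tyof (App s t) =
     (case tyof s of Some (Fun A B) \<Rightarrow> (if tyof t = Some A then Some B else None) | _ \<Rightarrow> None)"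
| "tyof (Lam x t) = (case tyof t of Some B \<Rightarrow> Some (Fun (nty x) B) | None \<Rightarrow> None)"

definition wt :: "tm \<Rightarrow> bool" where
  "wt t \<longleftrightarrow> tyof t \<noteq> None"

fun is_base :: "ty \<Rightarrow> bool" where
  "is_base (Fun _ _) = False"
| "is_base _ = True"

fun is_var :: "name \<Rightarrow> bool" where
  "is_var (V _ _) = True"
| "is_var _ = False"

definition apps :: "tm \<Rightarrow> tm list \<Rightarrow> tm" where
  "apps h ss = foldl App h ss"

definition neg :: "tm \<Rightarrow> tm" where
  "neg s = App (N Neg) s"

definition eqt :: "ty \<Rightarrow> tm \<Rightarrow> tm \<Rightarrow> tm" where
  "eqt T s t = App (App (N (Eq T)) s) t"

definition neqt :: "ty \<Rightarrow> tm \<Rightarrow> tm \<Rightarrow> tm" where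
  "neqt T s t = neg (eqt T s t)"

definition normop :: "(tm \<Rightarrow> tm) \<Rightarrow> bool" where
  "normop nf \<longleftrightarrow>
     (\<forall>s T. tyof s = Some T \<longrightarrow> tyof (nf s) = Some T) \<and>
     (\<forall>s. wt s \<longrightarrow> nf (nf s) = nf s) \<and>
     (\<forall>s t. wt (App s t) \<longrightarrow> nf (App (nf s) t) = nf (App s t)) \<and>
     (\<forall>x ss T. tyof (apps (N x) ss) = Some T \<longrightarrow> is_base T \<longrightarrow>
         nf (apps (N x) ss) = apps (N x) (map nf ss))"

definition normal :: "(tm \<Rightarrow> tm) \<Rightarrow> tm \<Rightarrow> bool" where
  "normal nf s \<longleftrightarrow> nf s = s"

definition formula :: "tm \<Rightarrow> bool" where
  "formula s \<longleftrightarrow> tyof s = Some To"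

definition branch :: "(tm \<Rightarrow> tm) \<Rightarrow> tm set \<Rightarrow> bool" where
  "branch nf E \<longleftrightarrow> (\<forall>s\<in>E. formula s \<and> normal nf s)"

definition evident :: "(tm \<Rightarrow> tm) \<Rightarrow> tm set \<Rightarrow> bool" where
  "evident nf E \<longleftrightarrow>
     branch nf E \<and>
     \<comment> \<open>DN\<close>
     (\<forall>s. neg (neg s) \<in> E \<longrightarrow> s \<in> E) \<and>
     \<comment> \<open>BQ\<close>
     (\<forall>s t. eqt To s t \<in> E \<longrightarrow> (s \<in> E \<and> t \<in> E) \<or> (neg s \<in> E \<and> neg t \<in> E)) \<and>
     \<comment> \<open>BE\<close>
     (\<forall>s t. neqt To s t \<in> E \<longrightarrow> (s \<in> E \<and> neg t \<in> E) \<or> (neg s \<in> E \<and> t \<in> E)) \<and>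
     \<comment> \<open>FQ\<close>
     (\<forall>\<sigma> \<tau> s t. eqt (Fun \<sigma> \<tau>) s t \<in> E \<longrightarrow>
        (\<forall>u. tyof u = Some \<sigma> \<and> normal nf u \<longrightarrow> eqt \<tau> (nf (App s u)) (nf (App t u)) \<in> E)) \<and>
     \<comment> \<open>FE\<close>
     (\<forall>\<sigma> \<tau> s t. neqt (Fun \<sigma> \<tau>) s t \<in> E \<longrightarrow>
        (\<exists>k. neqt \<tau> (nf (App s (N (V k \<sigma>)))) (nf (App t (N (V k \<sigma>)))) \<in> E)) \<and>
     \<comment> \<open>Mat\<close>
     (\<forall>x ss ts. is_var x \<longrightarrow> length ss = length ts \<longrightarrow>
        apps (N x) ss \<in> E \<longrightarrow> neg (apps (N x) ts) \<in> E \<longrightarrow>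
        1 \<le> length ss \<and> (\<exists>i<length ss. \<exists>\<sigma>. neqt \<sigma> (ss ! i) (ts ! i) \<in> E)) \<and>
     \<comment> \<open>Dec\<close>
     (\<forall>k x ss ts. is_var x \<longrightarrow> length ss = length ts \<longrightarrow>
        neqt (Sort k) (apps (N x) ss) (apps (N x) ts) \<in> E \<longrightarrow>
        1 \<le> length ss \<and> (\<exists>i<length ss. \<exists>\<sigma>. neqt \<sigma> (ss ! i) (ts ! i) \<in> E)) \<and>
     \<comment> \<open>Con\<close>
     (\<forall>k s t u v. eqt (Sort k) s t \<in> E \<longrightarrow> neqt (Sort k) u v \<in> E \<longrightarrow>
        (neqt (Sort k) s u \<in> E \<and> neqt (Sort k) t u \<in> E) \<or>
        (neqt (Sort k) s v \<in> E \<and> neqt (Sort k) t v \<in> E))"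

definition complete_branch :: "(tm \<Rightarrow> tm) \<Rightarrow> tm set \<Rightarrow> bool" where
  "complete_branch nf E \<longleftrightarrow>
     (\<forall>s. formula s \<and> normal nf s \<longrightarrow> s \<in> E \<or> neg s \<in> E)"

definition acc :: "(tm \<Rightarrow> tm) \<Rightarrow> tm set set \<Rightarrow> bool" where
  "acc nf \<Gamma> \<longleftrightarrow>
     (\<forall>A\<in>\<Gamma>. branch nf A) \<and>
     (\<forall>A\<in>\<Gamma>.
       \<comment> \<open>DN\<close>
       (\<forall>s. neg (neg s) \<in> A \<longrightarrow> A \<union> {s} \<in> \<Gamma>) \<and>
       \<comment> \<open>BQ\<close>
       (\<forall>s t. eqt To s t \<in> A \<longrightarrow> A \<union> {s, t} \<in> \<Gamma> \<or> A \<union> {neg s, neg t} \<in> \<Gamma>) \<and>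
       \<comment> \<open>BE\<close>
       (\<forall>s t. neqt To s t \<in> A \<longrightarrow> A \<union> {s, neg t} \<in> \<Gamma> \<or> A \<union> {neg s, t} \<in> \<Gamma>) \<and>
       \<comment> \<open>FQ\<close>
       (\<forall>\<sigma> \<tau> s t. eqt (Fun \<sigma> \<tau>) s t \<in> A \<longrightarrow>
          (\<forall>u. tyof u = Some \<sigma> \<and> normal nf u \<longrightarrow>
             A \<union> {eqt \<tau> (nf (App s u)) (nf (App t u))} \<in> \<Gamma>)) \<and>
       \<comment> \<open>FE\<close>
       (\<forall>\<sigma> \<tau> s t. neqt (Fun \<sigma> \<tau>) s t \<in> A \<longrightarrow>
          (\<exists>k. A \<union> {neqt \<tau> (nf (App s (N (V k \<sigma>)))) (nf (App t (N (V k \<sigma>))))} \<in> \<Gamma>)) \<and>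
       \<comment> \<open>Mat\<close>
       (\<forall>x ss ts. is_var x \<longrightarrow> length ss = length ts \<longrightarrow>
          apps (N x) ss \<in> A \<longrightarrow> neg (apps (N x) ts) \<in> A \<longrightarrow>
          1 \<le> length ss \<and> (\<exists>i<length ss. \<exists>\<sigma>. A \<union> {neqt \<sigma> (ss ! i) (ts ! i)} \<in> \<Gamma>)) \<and>
       \<comment> \<open>Dec\<close>
       (\<forall>k x ss ts. is_var x \<longrightarrow> length ss = length ts \<longrightarrow>
          neqt (Sort k) (apps (N x) ss) (apps (N x) ts) \<in> A \<longrightarrow>
          1 \<le> length ss \<and> (\<exists>i<length ss. \<exists>\<sigma>. A \<union> {neqt \<sigma> (ss ! i) (ts ! i)} \<in> \<Gamma>)) \<and>
       \<comment> \<open>Con\<close>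
       (\<forall>k s t u v. eqt (Sort k) s t \<in> A \<longrightarrow> neqt (Sort k) u v \<in> A \<longrightarrow>
          A \<union> {neqt (Sort k) s u, neqt (Sort k) t u} \<in> \<Gamma> \<or>
          A \<union> {neqt (Sort k) s v, neqt (Sort k) t v} \<in> \<Gamma>))"

definition complete_acc :: "(tm \<Rightarrow> tm) \<Rightarrow> tm set set \<Rightarrow> bool" where
  "complete_acc nf \<Gamma> \<longleftrightarrow>
     (\<forall>A\<in>\<Gamma>. \<forall>s. formula s \<and> normal nf s \<longrightarrow> A \<union> {s} \<in> \<Gamma> \<or> A \<union> {neg s} \<in> \<Gamma>)"

end

theory Submission
  imports Defs "HOL-Library.Countable"
begin

instance ty :: countable by countable_datatype
instance name :: countable by countable_datatype
instance tm :: countable by countable_datatype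

datatype task = TDN tm | TBQ tm tm | TBE tm tm | TFQ ty tm tm tm | TFE ty ty tm tm
  | TMD "tm list" "tm list" | TCon nat tm tm tm tm | TCo tm

instance task :: countable by countable_datatype

fun adds :: "(tm \<Rightarrow> tm) \<Rightarrow> task \<Rightarrow> tm set set" where
  "adds nf (TDN s) = {{s}}"
| "adds nf (TBQ s t) = {{s,t},{neg s, neg t}}"
| "adds nf (TBE s t) = {{s,neg t},{neg s,t}}"
| "adds nf (TFQ \<tau> s t u) = {{eqt \<tau> (nf (App s u)) (nf (App t u))}}"
| "adds nf (TFE \<sigma> \<tau> s t) = {{neqt \<tau> (nf (App s (N (V k \<sigma>)))) (nf (App t (N (V k \<sigma>))))} | k. True}"
| "adds nf (TMD ss ts) = {{neqt \<sigma> (ss!i) (ts!i)} | i \<sigma>. i < length ss}"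
| "adds nf (TCon k s t u v) = {{neqt (Sort k) s u, neqt (Sort k) t u},{neqt (Sort k) s v, neqt (Sort k) t v}}"
| "adds nf (TCo s) = {{s},{neg s}}"

definition task_of :: "nat \<Rightarrow> task" where
  "task_of n = from_nat (fst (prod_decode n))"

lemma task_of_enc: "task_of (prod_encode (to_nat t, m)) = t"
  by (simp add: task_of_def prod_encode_inverse)

definition step :: "(tm \<Rightarrow> tm) \<Rightarrow> tm set set \<Rightarrow> task \<Rightarrow> tm set \<Rightarrow> tm set" where
  "step nf \<Gamma> t B = (if \<exists>X\<in>adds nf t. B \<union> X \<in> \<Gamma>
     then B \<union> (SOME X. X \<in> adds nf t \<and> B \<union> X \<in> \<Gamma>) else B)"

primrec chain :: "(tm \<Rightarrow> tm) \<Rightarrow> tm set set \<Rightarrow> tm set \<Rightarrow> nat \<Rightarrow> tm set" where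
  "chain nf \<Gamma> A 0 = A"
| "chain nf \<Gamma> A (Suc n) = step nf \<Gamma> (task_of n) (chain nf \<Gamma> A n)"

context
  fixes nf :: "tm \<Rightarrow> tm" and \<Gamma> :: "tm set set" and A :: "tm set"
  assumes acc: "acc nf \<Gamma>" and A: "A \<in> \<Gamma>"
begin

abbreviation "C \<equiv> chain nf \<Gamma> A"
abbreviation "E \<equiv> (\<Union>n. C n)"

lemma C_in: "C n \<in> \<Gamma>"
proof (induction n)
  case 0 then show ?case using A by simp
next
  case (Suc n)
  show ?case
  proof (cases "\<exists>X\<in>adds nf (task_of n). C n \<union> X \<in> \<Gamma>")
    case True
    then have "\<exists>X. X \<in> adds nf (task_of n) \<and> C n \<union> X \<in> \<Gamma>" by blast
    from someI_ex[OF this] True show ?thesis by (simp add: step_def)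
  qed (use Suc in \<open>simp add: step_def\<close>)
qed

lemma C_mono: "m \<le> n \<Longrightarrow> C m \<subseteq> C n"
proof (induction n)
  case 0 then show ?case by simp
next
  case (Suc n)
  have "C n \<subseteq> C (Suc n)" by (auto simp: step_def)
  with Suc show ?case by (cases "m = Suc n") auto
qed

lemma key:
  assumes "\<forall>n\<ge>m. \<exists>X\<in>adds nf t. C n \<union> X \<in> \<Gamma>"
  shows "\<exists>X\<in>adds nf t. X \<subseteq> E"
proof -
  define n where "n = prod_encode (to_nat t, m)"
  have "m \<le> n" unfolding n_def by (rule le_prod_encode_2)
  with assms have ex: "\<exists>X. X \<in> adds nf t \<and> C n \<union> X \<in> \<Gamma>" by blast
  have tn: "task_of n = t" unfolding n_def by (rule task_of_enc)
  let ?X = "SOME X. X \<in> adds nf t \<and> C n \<union> X \<in> \<Gamma>"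
  have X: "?X \<in> adds nf t" using someI_ex[OF ex] by blast
  have "C (Suc n) = C n \<union> ?X" using ex tn by (auto simp: step_def)
  then have "?X \<subseteq> E" by blast
  with X show ?thesis by blast
qed

lemma inE1: "s \<in> E \<Longrightarrow> \<exists>m. \<forall>n\<ge>m. s \<in> C n"
  using C_mono by blast

lemma inE2: "s \<in> E \<Longrightarrow> t \<in> E \<Longrightarrow> \<exists>m. \<forall>n\<ge>m. s \<in> C n \<and> t \<in> C n"
proof -
  assume "s \<in> E" "t \<in> E"
  then obtain a b where "s \<in> C a" "t \<in> C b" by blast
  then have "\<forall>n\<ge>max a b. s \<in> C n \<and> t \<in> C n" using C_mono
    by (meson max.boundedE subsetD)
  then show ?thesis by blast
qed

lemma accD:
  assumes "B \<in> \<Gamma>"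
  shows "branch nf B"
  and "neg (neg s) \<in> B \<Longrightarrow> B \<union> {s} \<in> \<Gamma>"
  and "eqt To s t \<in> B \<Longrightarrow> B \<union> {s, t} \<in> \<Gamma> \<or> B \<union> {neg s, neg t} \<in> \<Gamma>"
  and "neqt To s t \<in> B \<Longrightarrow> B \<union> {s, neg t} \<in> \<Gamma> \<or> B \<union> {neg s, t} \<in> \<Gamma>"
  and "eqt (Fun \<sigma> \<tau>) s t \<in> B \<Longrightarrow> tyof u = Some \<sigma> \<Longrightarrow> normal nf u \<Longrightarrow>
             B \<union> {eqt \<tau> (nf (App s u)) (nf (App t u))} \<in> \<Gamma>"
  and "neqt (Fun \<sigma> \<tau>) s t \<in> B \<Longrightarrow>
          (\<exists>k. B \<union> {neqt \<tau> (nf (App s (N (V k \<sigma>)))) (nf (App t (N (V k \<sigma>))))} \<in> \<Gamma>)"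
  and "is_var x \<Longrightarrow> length ss = length ts \<Longrightarrow>
          apps (N x) ss \<in> B \<Longrightarrow> neg (apps (N x) ts) \<in> B \<Longrightarrow>
          1 \<le> length ss \<and> (\<exists>i<length ss. \<exists>\<sigma>. B \<union> {neqt \<sigma> (ss ! i) (ts ! i)} \<in> \<Gamma>)"
  and "is_var x \<Longrightarrow> length ss = length ts \<Longrightarrow>
          neqt (Sort k) (apps (N x) ss) (apps (N x) ts) \<in> B \<Longrightarrow>
          1 \<le> length ss \<and> (\<exists>i<length ss. \<exists>\<sigma>. B \<union> {neqt \<sigma> (ss ! i) (ts ! i)} \<in> \<Gamma>)"
  and "eqt (Sort k) s t \<in> B \<Longrightarrow> neqt (Sort k) u v \<in> B \<Longrightarrow>
          B \<union> {neqt (Sort k) s u, neqt (Sort k) t u} \<in> \<Gamma> \<or>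
          B \<union> {neqt (Sort k) s v, neqt (Sort k) t v} \<in> \<Gamma>"
proof -
  note r = bspec[OF acc[unfolded acc_def, THEN conjunct2] assms]
  note r1 = r[THEN conjunct1] and r2 = r[THEN conjunct2, THEN conjunct1]
    and r3 = r[THEN conjunct2, THEN conjunct2, THEN conjunct1]
    and r4 = r[THEN conjunct2, THEN conjunct2, THEN conjunct2, THEN conjunct1]
    and r5 = r[THEN conjunct2, THEN conjunct2, THEN conjunct2, THEN conjunct2, THEN conjunct1]
    and r6 = r[THEN conjunct2, THEN conjunct2, THEN conjunct2, THEN conjunct2, THEN conjunct2, THEN conjunct1]
    and r7 = r[THEN conjunct2, THEN conjunct2, THEN conjunct2, THEN conjunct2, THEN conjunct2, THEN conjunct2, THEN conjunct1]
    and r8 = r[THEN conjunct2, THEN conjunct2, THEN conjunct2, THEN conjunct2, THEN conjunct2, THEN conjunct2, THEN conjunct2]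
  show "branch nf B" using acc assms unfolding acc_def by blast
  show "neg (neg s) \<in> B \<Longrightarrow> B \<union> {s} \<in> \<Gamma>" using r1 by blast
  show "eqt To s t \<in> B \<Longrightarrow> B \<union> {s, t} \<in> \<Gamma> \<or> B \<union> {neg s, neg t} \<in> \<Gamma>" using r2 by blast
  show "neqt To s t \<in> B \<Longrightarrow> B \<union> {s, neg t} \<in> \<Gamma> \<or> B \<union> {neg s, t} \<in> \<Gamma>" using r3 by blast
  show "eqt (Fun \<sigma> \<tau>) s t \<in> B \<Longrightarrow> tyof u = Some \<sigma> \<Longrightarrow> normal nf u \<Longrightarrow>
             B \<union> {eqt \<tau> (nf (App s u)) (nf (App t u))} \<in> \<Gamma>" using r4 by blast
  show "neqt (Fun \<sigma> \<tau>) s t \<in> B \<Longrightarrow>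
          (\<exists>k. B \<union> {neqt \<tau> (nf (App s (N (V k \<sigma>)))) (nf (App t (N (V k \<sigma>))))} \<in> \<Gamma>)" using r5 by blast
  show "is_var x \<Longrightarrow> length ss = length ts \<Longrightarrow>
          apps (N x) ss \<in> B \<Longrightarrow> neg (apps (N x) ts) \<in> B \<Longrightarrow>
          1 \<le> length ss \<and> (\<exists>i<length ss. \<exists>\<sigma>. B \<union> {neqt \<sigma> (ss ! i) (ts ! i)} \<in> \<Gamma>)" using r6 by blast
  show "is_var x \<Longrightarrow> length ss = length ts \<Longrightarrow>
          neqt (Sort k) (apps (N x) ss) (apps (N x) ts) \<in> B \<Longrightarrow>
          1 \<le> length ss \<and> (\<exists>i<length ss. \<exists>\<sigma>. B \<union> {neqt \<sigma> (ss ! i) (ts ! i)} \<in> \<Gamma>)" using r7 by blast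
  show "eqt (Sort k) s t \<in> B \<Longrightarrow> neqt (Sort k) u v \<in> B \<Longrightarrow>
          B \<union> {neqt (Sort k) s u, neqt (Sort k) t u} \<in> \<Gamma> \<or>
          B \<union> {neqt (Sort k) s v, neqt (Sort k) t v} \<in> \<Gamma>" using r8 by blast
qed


lemma E_evident: "evident nf E"
  unfolding evident_def
proof (intro conjI allI impI)
  show "branch nf E" using accD(1)[OF C_in] unfolding branch_def by blast
next
  fix s assume "neg (neg s) \<in> E"
  then obtain m where m: "\<forall>n\<ge>m. neg (neg s) \<in> C n" using inE1 by blast
  have "\<forall>n\<ge>m. \<exists>X\<in>adds nf (TDN s). C n \<union> X \<in> \<Gamma>" using m accD(2)[OF C_in] by auto
  from key[OF this] show "s \<in> E" by auto
next
  fix s t assume "eqt To s t \<in> E"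
  then obtain m where m: "\<forall>n\<ge>m. eqt To s t \<in> C n" using inE1 by blast
  have "\<forall>n\<ge>m. \<exists>X\<in>adds nf (TBQ s t). C n \<union> X \<in> \<Gamma>" using m accD(3)[OF C_in] by auto
  from key[OF this] show "s \<in> E \<and> t \<in> E \<or> neg s \<in> E \<and> neg t \<in> E" by auto
next
  fix s t assume "neqt To s t \<in> E"
  then obtain m where m: "\<forall>n\<ge>m. neqt To s t \<in> C n" using inE1 by blast
  have "\<forall>n\<ge>m. \<exists>X\<in>adds nf (TBE s t). C n \<union> X \<in> \<Gamma>" using m accD(4)[OF C_in] by auto
  from key[OF this] show "s \<in> E \<and> neg t \<in> E \<or> neg s \<in> E \<and> t \<in> E" by auto
next
  fix \<sigma> \<tau> s t u assume "eqt (Fun \<sigma> \<tau>) s t \<in> E" and u: "tyof u = Some \<sigma> \<and> normal nf u"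
  then obtain m where m: "\<forall>n\<ge>m. eqt (Fun \<sigma> \<tau>) s t \<in> C n" using inE1 by blast
  have "\<forall>n\<ge>m. \<exists>X\<in>adds nf (TFQ \<tau> s t u). C n \<union> X \<in> \<Gamma>" using m u accD(5)[OF C_in] by auto
  from key[OF this] show "eqt \<tau> (nf (App s u)) (nf (App t u)) \<in> E" by auto
next
  fix \<sigma> \<tau> s t assume "neqt (Fun \<sigma> \<tau>) s t \<in> E"
  then obtain m where m: "\<forall>n\<ge>m. neqt (Fun \<sigma> \<tau>) s t \<in> C n" using inE1 by blast
  have "\<forall>n\<ge>m. \<exists>X\<in>adds nf (TFE \<sigma> \<tau> s t). C n \<union> X \<in> \<Gamma>"
  proof (intro allI impI)
    fix n assume "m \<le> n"
    then obtain k where k: "C n \<union> {neqt \<tau> (nf (App s (N (V k \<sigma>)))) (nf (App t (N (V k \<sigma>))))} \<in> \<Gamma>"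
      using m accD(6)[OF C_in] by blast
    show "\<exists>X\<in>adds nf (TFE \<sigma> \<tau> s t). C n \<union> X \<in> \<Gamma>"
      by (rule bexI[where x="{neqt \<tau> (nf (App s (N (V k \<sigma>)))) (nf (App t (N (V k \<sigma>))))}"]) (use k in auto)
  qed
  from key[OF this]
  show "\<exists>k. neqt \<tau> (nf (App s (N (V k \<sigma>)))) (nf (App t (N (V k \<sigma>)))) \<in> E" by auto
next
  fix x ss ts assume x: "is_var x" "length ss = length ts"
    and "apps (N x) ss \<in> E" "neg (apps (N x) ts) \<in> E"
  then obtain m where m: "\<forall>n\<ge>m. apps (N x) ss \<in> C n \<and> neg (apps (N x) ts) \<in> C n"
    using inE2 by blast
  have "\<forall>n\<ge>m. \<exists>X\<in>adds nf (TMD ss ts). C n \<union> X \<in> \<Gamma>"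
  proof (intro allI impI)
    fix n assume "m \<le> n"
    then obtain i \<sigma> where i: "i < length ss" and k: "C n \<union> {neqt \<sigma> (ss ! i) (ts ! i)} \<in> \<Gamma>"
      using m x accD(7)[OF C_in] by meson
    show "\<exists>X\<in>adds nf (TMD ss ts). C n \<union> X \<in> \<Gamma>"
      by (rule bexI[where x="{neqt \<sigma> (ss ! i) (ts ! i)}"]) (use i k in auto)
  qed
  from key[OF this]
  have "\<exists>i<length ss. \<exists>\<sigma>. neqt \<sigma> (ss ! i) (ts ! i) \<in> E" by fastforce
  moreover have "1 \<le> length ss" using m x accD(7)[OF C_in] by blast
  ultimately show "1 \<le> length ss" "\<exists>i<length ss. \<exists>\<sigma>. neqt \<sigma> (ss ! i) (ts ! i) \<in> E" by blast+
next
  fix k x ss ts assume x: "is_var x" "length ss = length ts"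
    and "neqt (Sort k) (apps (N x) ss) (apps (N x) ts) \<in> E"
  then obtain m where m: "\<forall>n\<ge>m. neqt (Sort k) (apps (N x) ss) (apps (N x) ts) \<in> C n"
    using inE1 by blast
  have "\<forall>n\<ge>m. \<exists>X\<in>adds nf (TMD ss ts). C n \<union> X \<in> \<Gamma>"
  proof (intro allI impI)
    fix n assume "m \<le> n"
    then obtain i \<sigma> where i: "i < length ss" and k: "C n \<union> {neqt \<sigma> (ss ! i) (ts ! i)} \<in> \<Gamma>"
      using m x accD(8)[OF C_in] by meson
    show "\<exists>X\<in>adds nf (TMD ss ts). C n \<union> X \<in> \<Gamma>"
      by (rule bexI[where x="{neqt \<sigma> (ss ! i) (ts ! i)}"]) (use i k in auto)
  qed
  from key[OF this]
  have "\<exists>i<length ss. \<exists>\<sigma>. neqt \<sigma> (ss ! i) (ts ! i) \<in> E" by fastforce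
  moreover have "1 \<le> length ss" using m x accD(8)[OF C_in] by blast
  ultimately show "1 \<le> length ss" "\<exists>i<length ss. \<exists>\<sigma>. neqt \<sigma> (ss ! i) (ts ! i) \<in> E" by blast+
next
  fix k s t u v assume "eqt (Sort k) s t \<in> E" "neqt (Sort k) u v \<in> E"
  then obtain m where m: "\<forall>n\<ge>m. eqt (Sort k) s t \<in> C n \<and> neqt (Sort k) u v \<in> C n"
    using inE2 by blast
  have "\<forall>n\<ge>m. \<exists>X\<in>adds nf (TCon k s t u v). C n \<union> X \<in> \<Gamma>" using m accD(9)[OF C_in] by auto
  from key[OF this]
  show "neqt (Sort k) s u \<in> E \<and> neqt (Sort k) t u \<in> E \<or>
        neqt (Sort k) s v \<in> E \<and> neqt (Sort k) t v \<in> E" by auto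
qed

lemma E_complete:
  assumes "complete_acc nf \<Gamma>"
  shows "complete_branch nf E"
  unfolding complete_branch_def
proof (intro allI impI)
  fix s assume s: "formula s \<and> normal nf s"
  have "\<forall>n\<ge>0. \<exists>X\<in>adds nf (TCo s). C n \<union> X \<in> \<Gamma>"
    using assms s C_in unfolding complete_acc_def by auto
  from key[OF this] show "s \<in> E \<or> neg s \<in> E" by auto
qed

lemma A_sub: "A \<subseteq> E"
proof -
  have "C 0 \<subseteq> E" by blast
  then show ?thesis by simp
qed

end

theorem lemma8p2:
  fixes nf :: "tm \<Rightarrow> tm" and \<Gamma> :: "tm set set" and A :: "tm set"
  assumes "normop nf" and "acc nf \<Gamma>" and "A \<in> \<Gamma>"
  shows "(\<exists>E. evident nf E \<and> A \<subseteq> E) \<and>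
         (complete_acc nf \<Gamma> \<longrightarrow> (\<exists>E. evident nf E \<and> complete_branch nf E \<and> A \<subseteq> E))"
  using E_evident[OF assms(2,3)] E_complete[OF assms(2,3)] A_sub[OF assms(2,3)] by blast

end
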